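(* Let $\Gamma$ be an uncountable set, $K\subset\mathbb{R}^\Gamma$ compact, and $D_1,D_2$ separable metrizable spaces. If $f:\Gamma\to D_2$ is a determining function and $g:D_1\to D_2$ is a continuous surjection, then there exists a determining function $f':\Gamma\to D_1$.
   Context: A map $f:\Gamma\to D$ into a separable metrizable space $D$ is a determining function (for $K$) if for every $x\in K$, every compact $C\subset D$ and every $\varepsilon>0$, the set $\{\gamma\in f^{-1}(C): |x_\gamma|>\varepsilon\}$ is finite. *)

theory Defs
  imports "HOL-Analysis.Analysis"
begin

text \<open>The index set Gamma is the universe of the type 'g; points of R^Gamma are
  functions 'g => real, carrying the product topology (type class instance).\<close>

definition determining :: "'d topology \<Rightarrow> ('g \<Rightarrow> real) set \<Rightarrow> ('g \<Rightarrow> 'd) \<Rightarrow> bool" where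
  "determining D K f \<longleftrightarrow>
     (\<forall>\<gamma>. f \<gamma> \<in> topspace D) \<and>
     (\<forall>x\<in>K. \<forall>C. compactin D C \<longrightarrow> (\<forall>\<epsilon>>0. finite {\<gamma>. f \<gamma> \<in> C \<and> \<bar>x \<gamma>\<bar> > \<epsilon>}))"

end

theory Submission
  imports Defs
begin

theorem lemma2p4:
  fixes K :: "('g \<Rightarrow> real) set"
    and D1 :: "'a topology" and D2 :: "'b topology"
    and f :: "'g \<Rightarrow> 'b" and g :: "'a \<Rightarrow> 'b"
  assumes "uncountable (UNIV :: 'g set)"
    and "compact K"
    and "separable_space D1" "metrizable_space D1"
    and "separable_space D2" "metrizable_space D2"
    and "determining D2 K f"
    and "continuous_map D1 D2 g" "g ` topspace D1 = topspace D2"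
  shows "\<exists>f' :: 'g \<Rightarrow> 'a. determining D1 K f'"
proof -
  define h where "h y = (SOME x. x \<in> topspace D1 \<and> g x = y)" for y
  have hf: "h (f \<gamma>) \<in> topspace D1 \<and> g (h (f \<gamma>)) = f \<gamma>" for \<gamma>
  proof -
    have "f \<gamma> \<in> topspace D2" using assms(7) unfolding determining_def by blast
    then have "\<exists>x. x \<in> topspace D1 \<and> g x = f \<gamma>" using assms(9) by force
    then show ?thesis unfolding h_def by (rule someI_ex)
  qed
  have "determining D1 K (h \<circ> f)"
    unfolding determining_def
  proof (intro conjI ballI allI impI)
    fix \<gamma> show "(h \<circ> f) \<gamma> \<in> topspace D1" using hf by simp
  next
    fix x C and \<epsilon> :: real
    assume x: "x \<in> K" and C: "compactin D1 C" and e: "\<epsilon> > 0"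
    have "compactin D2 (g ` C)" using image_compactin[OF C assms(8)] .
    then have fin: "finite {\<gamma>. f \<gamma> \<in> g ` C \<and> \<bar>x \<gamma>\<bar> > \<epsilon>}"
      using assms(7) x e unfolding determining_def by blast
    have "{\<gamma>. (h \<circ> f) \<gamma> \<in> C \<and> \<bar>x \<gamma>\<bar> > \<epsilon>} \<subseteq> {\<gamma>. f \<gamma> \<in> g ` C \<and> \<bar>x \<gamma>\<bar> > \<epsilon>}"
      using hf by (auto, metis image_eqI)
    then show "finite {\<gamma>. (h \<circ> f) \<gamma> \<in> C \<and> \<bar>x \<gamma>\<bar> > \<epsilon>}" using fin finite_subset by blast
  qed
  then show ?thesis by blast
qed

end
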